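(* Let $X=\{x_1,\ldots,x_n\}$ be a finite set, $d: X\times X\to\mathbb{R}$ a dissimilarity, and $M\subseteq X$ a set of $k\ge 2$ medoids. If $d'$ is an $M$-consistent variant of $d$, then $\tilde{S}(X,d',M)\ge \tilde{S}(X,d,M)$ (consistency of the Average Medoid Silhouette).
   Context: For $x_i\in X$, let $d_1(i)$ denote the distance to the closest medoid in $M$ and $d_2(i)$ the distance to the second closest medoid in $M$ (with respect to the dissimilarity under consideration). The Medoid Silhouette of $x_i$ is $\tilde{s}_i(X,d,M)=1-\frac{d_1(i)}{d_2(i)}$, with the convention $\tilde{s}_i=1$ when $d_1(i)=d_2(i)=0$; the Average Medoid Silhouette is $\tilde{S}(X,d,M)=\frac{1}{n}\sum_{i=1}^n\tilde{s}_i(X,d,M)$. Write $x_i\sim_M x_{i'}$ if $x_i$ and $x_{i'}$ have the same nearest medoid in $M$ (with respect to $d$), and $x_i\not\sim_M x_{i'}$ otherwise. A dissimilarity $d'$ on $X$ is an $M$-consistent variant of $d$ if $d'(x_i,x_{i'})\le d(x_i,x_{i'})$ whenever $x_i\sim_M x_{i'}$, and $d'(x_i,x_{i'})\ge d(x_i,x_{i'})$ whenever $x_i\not\sim_M x_{i'}$. *)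

theory Defs
  imports Complex_Main "HOL-Library.Multiset"
begin

definition dissimilarity_on :: "'a set \<Rightarrow> ('a \<Rightarrow> 'a \<Rightarrow> real) \<Rightarrow> bool" where
  "dissimilarity_on X d \<longleftrightarrow>
     (\<forall>x\<in>X. \<forall>y\<in>X. 0 \<le> d x y \<and> d x y = d y x) \<and> (\<forall>x\<in>X. d x x = 0)"

definition medoid_dists :: "('a \<Rightarrow> 'a \<Rightarrow> real) \<Rightarrow> 'a set \<Rightarrow> 'a \<Rightarrow> real list" where
  "medoid_dists d M x = sorted_list_of_multiset (image_mset (d x) (mset_set M))"

definition dist1 :: "('a \<Rightarrow> 'a \<Rightarrow> real) \<Rightarrow> 'a set \<Rightarrow> 'a \<Rightarrow> real" where
  "dist1 d M x = medoid_dists d M x ! 0"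

definition dist2 :: "('a \<Rightarrow> 'a \<Rightarrow> real) \<Rightarrow> 'a set \<Rightarrow> 'a \<Rightarrow> real" where
  "dist2 d M x = medoid_dists d M x ! 1"

definition medoid_silhouette :: "('a \<Rightarrow> 'a \<Rightarrow> real) \<Rightarrow> 'a set \<Rightarrow> 'a \<Rightarrow> real" where
  "medoid_silhouette d M x =
     (if dist1 d M x = 0 \<and> dist2 d M x = 0 then 1 else 1 - dist1 d M x / dist2 d M x)"

definition avg_medoid_silhouette :: "'a set \<Rightarrow> ('a \<Rightarrow> 'a \<Rightarrow> real) \<Rightarrow> 'a set \<Rightarrow> real" where
  "avg_medoid_silhouette X d M = (\<Sum>x\<in>X. medoid_silhouette d M x) / real (card X)"

definition nearest_medoid_assignment ::
  "'a set \<Rightarrow> ('a \<Rightarrow> 'a \<Rightarrow> real) \<Rightarrow> 'a set \<Rightarrow> ('a \<Rightarrow> 'a) \<Rightarrow> bool" where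
  "nearest_medoid_assignment X d M nm \<longleftrightarrow>
     (\<forall>x\<in>X. nm x \<in> M \<and> (\<forall>m\<in>M. d x (nm x) \<le> d x m)) \<and> (\<forall>m\<in>M. nm m = m)"

definition same_medoid :: "('a \<Rightarrow> 'a) \<Rightarrow> 'a \<Rightarrow> 'a \<Rightarrow> bool" where
  "same_medoid nm x y \<longleftrightarrow> nm x = nm y"

definition M_consistent_variant ::
  "'a set \<Rightarrow> ('a \<Rightarrow> 'a) \<Rightarrow> ('a \<Rightarrow> 'a \<Rightarrow> real) \<Rightarrow> ('a \<Rightarrow> 'a \<Rightarrow> real) \<Rightarrow> bool" where
  "M_consistent_variant X nm d d' \<longleftrightarrow>
     (\<forall>x\<in>X. \<forall>y\<in>X.
        (same_medoid nm x y \<longrightarrow> d' x y \<le> d x y) \<and>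
        (\<not> same_medoid nm x y \<longrightarrow> d' x y \<ge> d x y))"

end

theory Submission
  imports Defs
begin

lemma md_basic:
  assumes "finite M" "card M \<ge> 2"
  shows "\<exists>a b rest. sorted_list_of_multiset (image_mset f (mset_set M)) = a # b # rest
     \<and> sorted (a # b # rest) \<and> mset (a#b#rest) = image_mset f (mset_set M)"
proof -
  let ?L = "sorted_list_of_multiset (image_mset f (mset_set M))"
  have len: "length ?L = card M" by (metis mset_sorted_list_of_multiset size_mset size_image_mset size_mset_set)
  then obtain a b rest where "?L = a # b # rest" using assms
    by (metis Suc_le_length_iff numeral_2_eq_2)
  then show ?thesis by (metis mset_sorted_list_of_multiset sorted_sorted_list_of_multiset)
qed

lemma md_first:
  assumes "finite M" "card M \<ge> 2" "m \<in> M"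
  shows "medoid_dists f M x ! 0 \<le> f x m"
    and "\<exists>m'\<in>M. medoid_dists f M x ! 0 = f x m'"
    and "medoid_dists f M x ! 0 \<le> medoid_dists f M x ! 1"
proof -
  obtain a b rest where L: "medoid_dists f M x = a # b # rest" and s: "sorted (a # b # rest)"
    and ms: "mset (a#b#rest) = image_mset (f x) (mset_set M)"
    using md_basic[OF assms(1,2), of "f x"] unfolding medoid_dists_def by blast
  have st: "set (a#b#rest) = f x ` M" using ms assms(1)
    by (metis finite_set_mset_mset_set set_image_mset set_mset_mset)
  show "medoid_dists f M x ! 0 \<le> f x m" using L s st assms(3) by auto
  show "\<exists>m'\<in>M. medoid_dists f M x ! 0 = f x m'" using L st by (auto simp: image_iff)
  show "medoid_dists f M x ! 0 \<le> medoid_dists f M x ! 1" using L s by auto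
qed

lemma md_second_upper:
  assumes "finite M" "card M \<ge> 2" "m \<in> M" "m' \<in> M" "m \<noteq> m'"
  shows "medoid_dists f M x ! 1 \<le> max (f x m) (f x m')"
proof (rule ccontr)
  assume c: "\<not> ?thesis"
  obtain a b rest where L: "medoid_dists f M x = a # b # rest" and s: "sorted (a # b # rest)"
    and ms: "mset (a#b#rest) = image_mset (f x) (mset_set M)"
    using md_basic[OF assms(1,2), of "f x"] unfolding medoid_dists_def by blast
  have lt: "f x m < b" "f x m' < b" using c L by auto
  have "filter (\<lambda>y. y < b) rest = []" using s by (auto simp: filter_empty_conv)
  hence "size (filter_mset (\<lambda>y. y < b) (mset (a#b#rest))) \<le> 1" by (simp flip: mset_filter)
  hence le1: "size (filter_mset (\<lambda>y. y < b) (image_mset (f x) (mset_set M))) \<le> 1" by (simp only: ms)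
  moreover have "{#m, m'#} \<subseteq># mset_set M"
  proof -
    have "mset_set {m, m'} \<subseteq># mset_set M" using assms by (intro subset_imp_msubset_mset_set) auto
    moreover have "mset_set {m, m'} = {#m, m'#}" using assms(5) by simp
    ultimately show ?thesis by simp
  qed
  hence "filter_mset (\<lambda>y. y < b) (image_mset (f x) {#m, m'#}) \<subseteq># filter_mset (\<lambda>y. y < b) (image_mset (f x) (mset_set M))"
    by (intro multiset_filter_mono image_mset_subseteq_mono)
  hence "size (filter_mset (\<lambda>y. y < b) (image_mset (f x) {#m, m'#})) \<le> size (filter_mset (\<lambda>y. y < b) (image_mset (f x) (mset_set M)))"
    by (rule size_mset_mono)
  moreover have "size (filter_mset (\<lambda>y. y < b) (image_mset (f x) {#m, m'#})) = 2" using lt by simp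
  ultimately show False using le1 by linarith
qed

lemma md_second_lower:
  assumes "finite M" "card M \<ge> 2" "m \<in> M"
  shows "\<exists>m'\<in>M. m' \<noteq> m \<and> f x m' \<le> medoid_dists f M x ! 1"
proof (rule ccontr)
  assume c: "\<not> ?thesis"
  obtain a b rest where L: "medoid_dists f M x = a # b # rest" and s: "sorted (a # b # rest)"
    and ms: "mset (a#b#rest) = image_mset (f x) (mset_set M)"
    using md_basic[OF assms(1,2), of "f x"] unfolding medoid_dists_def by blast
  have "mset_set M = add_mset m (mset_set (M - {m}))" using assms by (simp add: mset_set.remove)
  hence "image_mset (f x) (mset_set M) = add_mset (f x m) (image_mset (f x) (mset_set (M - {m})))" by simp
  moreover have e: "filter_mset (\<lambda>y. y \<le> b) (image_mset (f x) (mset_set (M - {m}))) = {#}"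
  proof -
    have "\<forall>y. y \<in># image_mset (f x) (mset_set (M - {m})) \<longrightarrow> \<not> y \<le> b"
      using c L assms(1) by (auto simp: not_le)
    thus ?thesis by (simp only: filter_mset_eq_mempty_iff)
  qed
  ultimately have eq2: "mset (a#b#rest) = add_mset (f x m) (image_mset (f x) (mset_set (M - {m})))" using ms by simp
  have "size (filter_mset (\<lambda>y. y \<le> b) (mset (a#b#rest))) \<le> 1" unfolding eq2
    using e by (cases "f x m \<le> b") (simp_all del: filter_mset_eq_mempty_iff)
  moreover have "size (filter_mset (\<lambda>y. y \<le> b) (mset (a#b#rest))) \<ge> 2" using s
    by (simp flip: mset_filter)
  ultimately show False by simp
qed

lemma sil_mono:
  fixes a b a' b' :: real
  assumes "0 \<le> a'" "a' \<le> a" "a \<le> b" "b \<le> b'" "a' \<le> b'"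
  shows "(if a = 0 \<and> b = 0 then 1 else 1 - a / b) \<le> (if a' = 0 \<and> b' = 0 then 1 else 1 - a' / b')"
proof (cases "b = 0")
  case True
  hence "a' = 0" "a = 0" using assms by linarith+
  then show ?thesis using True by simp
next
  case False
  hence bp: "b > 0" using assms by linarith
  hence "a' / b' \<le> a / b" using assms by (intro frac_le) auto
  then show ?thesis using assms bp by auto
qed

lemma point_mono:
  assumes "finite X" "M \<subseteq> X" "card M \<ge> 2"
    and "dissimilarity_on X d" "dissimilarity_on X d'"
    and "nearest_medoid_assignment X d M nm"
    and "M_consistent_variant X nm d d'"
    and "x \<in> X"
  shows "medoid_silhouette d M x \<le> medoid_silhouette d' M x"
proof -
  have fM: "finite M" using assms(1,2) finite_subset by blast
  define m0 where "m0 = nm x"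
  have m0M: "m0 \<in> M" and m0min: "\<And>m. m \<in> M \<Longrightarrow> d x m0 \<le> d x m"
    using assms(6,8) unfolding nearest_medoid_assignment_def m0_def by auto
  have nmM: "\<And>m. m \<in> M \<Longrightarrow> nm m = m" using assms(6) unfolding nearest_medoid_assignment_def by auto
  have cons: "\<And>y. y \<in> X \<Longrightarrow> nm x = nm y \<Longrightarrow> d' x y \<le> d x y"
    "\<And>y. y \<in> X \<Longrightarrow> nm x \<noteq> nm y \<Longrightarrow> d x y \<le> d' x y"
    using assms(7,8) unfolding M_consistent_variant_def same_medoid_def by auto
  have nn: "\<And>y. y \<in> X \<Longrightarrow> 0 \<le> d x y" "\<And>y. y \<in> X \<Longrightarrow> 0 \<le> d' x y"
    using assms(4,5,8) unfolding dissimilarity_on_def by auto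
  have d1: "dist1 d M x = d x m0"
  proof -
    have "dist1 d M x \<le> d x m0" using md_first(1)[OF fM assms(3) m0M] unfolding dist1_def .
    moreover obtain m' where m'M: "m' \<in> M" and "dist1 d M x = d x m'"
      using md_first(2)[OF fM assms(3) m0M, of d x] unfolding dist1_def by blast
    ultimately show ?thesis using m0min[OF m'M] by linarith
  qed
  have d12: "dist1 d M x \<le> dist2 d M x" "dist1 d' M x \<le> dist2 d' M x"
    using md_first(3)[OF fM assms(3) m0M] unfolding dist1_def dist2_def by auto
  have d1'0: "0 \<le> dist1 d' M x"
  proof -
    obtain m' where "m' \<in> M" "dist1 d' M x = d' x m'"
      using md_first(2)[OF fM assms(3) m0M, of d' x] unfolding dist1_def by blast
    thus ?thesis using nn(2)[of m'] assms(2) by auto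
  qed
  have d1'le: "dist1 d' M x \<le> dist1 d M x"
  proof -
    have "dist1 d' M x \<le> d' x m0" using md_first(1)[OF fM assms(3) m0M] unfolding dist1_def .
    also have "\<dots> \<le> d x m0" using cons(1)[of m0] m0M assms(2) nmM[OF m0M] unfolding m0_def by auto
    finally show ?thesis using d1 by simp
  qed
  have d2le: "dist2 d M x \<le> dist2 d' M x"
  proof -
    obtain m' where m': "m' \<in> M" "m' \<noteq> m0" "d' x m' \<le> dist2 d' M x"
      using md_second_lower[OF fM assms(3) m0M, of d' x] unfolding dist2_def by blast
    have "dist2 d M x \<le> max (d x m0) (d x m')"
      using md_second_upper[OF fM assms(3) m0M m'(1) m'(2)[symmetric]] unfolding dist2_def by simp
    also have "\<dots> = d x m'" using m0min[OF m'(1)] by simp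
    also have "\<dots> \<le> d' x m'" using cons(2)[of m'] m'(1,2) assms(2) nmM[OF m'(1)] unfolding m0_def by auto
    finally show ?thesis using m' by simp
  qed
  show ?thesis unfolding medoid_silhouette_def
    using sil_mono[OF d1'0 d1'le d12(1) d2le d12(2)] .
qed

theorem theorem2:
  fixes X M :: "'a set" and d d' :: "'a \<Rightarrow> 'a \<Rightarrow> real" and nm :: "'a \<Rightarrow> 'a"
  assumes "finite X"
    and "M \<subseteq> X"
    and "card M \<ge> 2"
    and "dissimilarity_on X d"
    and "dissimilarity_on X d'"
    and "nearest_medoid_assignment X d M nm"
    and "M_consistent_variant X nm d d'"
  shows "avg_medoid_silhouette X d' M \<ge> avg_medoid_silhouette X d M"
proof -
  have "(\<Sum>x\<in>X. medoid_silhouette d M x) \<le> (\<Sum>x\<in>X. medoid_silhouette d' M x)"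
    using point_mono[OF assms] by (intro sum_mono) auto
  thus ?thesis unfolding avg_medoid_silhouette_def by (intro divide_right_mono) auto
qed

end
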